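(* Let $0<\alpha<1$ and let $n$ be a positive integer. Assume the following induction hypothesis: for every integer $m$ with $1 \le m < n$, every digraph on $m$ vertices with minimum outdegree at least $\alpha m$ contains a directed cycle of length at most $4$. Let $G$ be a digraph on $n$ vertices such that: - every vertex of $G$ has outdegree exactly $r=\lceil \alpha n\rceil$; - $G$ contains no directed cycle of length at most $4$. Then for every arc $(u,v)\in E(G)$, $$n > r + \deg^-(v) + q(u,v) + (1-\alpha) r + (1-\alpha)^2\, t(u,v).$$
   Context: Digraphs have no loops and no parallel arcs; the arcs $(u,v)$ and $(v,u)$ together count as a directed cycle of length $2$. For a vertex $v$, define - $N^+(v)=\{u:(v,u)\in E(G)\}$; - $N^-(v)=\{u:(u,v)\in E(G)\}$; - $\deg^-(v)=|N^-(v)|$. For an arc $(u,v)\in E(G)$, define - $q(u,v)=|N^-(u)\setminus N^-(v)|$; - $t(u,v)=|N^+(u)\cap N^+(v)|$, the number of transitive triangles with base $(u,v)$. *)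

theory Defs
  imports Complex_Main
begin

definition digraph :: "'a set \<Rightarrow> ('a \<times> 'a) set \<Rightarrow> bool" where
  "digraph V E \<longleftrightarrow> finite V \<and> E \<subseteq> V \<times> V \<and> (\<forall>v. (v, v) \<notin> E)"

definition out_nbrs :: "('a \<times> 'a) set \<Rightarrow> 'a \<Rightarrow> 'a set" where
  "out_nbrs E v = {u. (v, u) \<in> E}"

definition in_nbrs :: "('a \<times> 'a) set \<Rightarrow> 'a \<Rightarrow> 'a set" where
  "in_nbrs E v = {u. (u, v) \<in> E}"

definition indeg :: "('a \<times> 'a) set \<Rightarrow> 'a \<Rightarrow> nat" where
  "indeg E v = card (in_nbrs E v)"

definition outdeg :: "('a \<times> 'a) set \<Rightarrow> 'a \<Rightarrow> nat" where
  "outdeg E v = card (out_nbrs E v)"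

definition qq :: "('a \<times> 'a) set \<Rightarrow> 'a \<Rightarrow> 'a \<Rightarrow> nat" where
  "qq E u v = card (in_nbrs E u - in_nbrs E v)"

definition tt :: "('a \<times> 'a) set \<Rightarrow> 'a \<Rightarrow> 'a \<Rightarrow> nat" where
  "tt E u v = card (out_nbrs E u \<inter> out_nbrs E v)"

definition is_dcycle :: "('a \<times> 'a) set \<Rightarrow> 'a list \<Rightarrow> bool" where
  "is_dcycle E vs \<longleftrightarrow> vs \<noteq> [] \<and> distinct vs \<and>
     (\<forall>i < length vs. (vs ! i, vs ! ((i + 1) mod length vs)) \<in> E)"

definition has_short_cycle :: "'a set \<Rightarrow> ('a \<times> 'a) set \<Rightarrow> nat \<Rightarrow> bool" where
  "has_short_cycle V E k \<longleftrightarrow> (\<exists>vs. set vs \<subseteq> V \<and> is_dcycle E vs \<and> length vs \<le> k)"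

end

theory Submission
  imports Defs
begin

lemma no2:
  assumes G: "digraph V E" and nc: "\<not> has_short_cycle V E 4"
    and e: "(a,b)\<in>E" "(b,a)\<in>E"
  shows False
proof -
  have sub: "E \<subseteq> V \<times> V" and nl: "\<forall>v. (v,v)\<notin>E" using G by (auto simp: digraph_def)
  have "a \<noteq> b" using e nl by auto
  then have "is_dcycle E [a,b]" using e by (auto simp: is_dcycle_def less_Suc_eq numeral_eq_Suc)
  moreover have "set [a,b] \<subseteq> V" using e sub by auto
  ultimately show False using nc unfolding has_short_cycle_def by fastforce
qed

lemma no3:
  assumes G: "digraph V E" and nc: "\<not> has_short_cycle V E 4"
    and e: "(a,b)\<in>E" "(b,c)\<in>E" "(c,a)\<in>E"
  shows False
proof -
  have sub: "E \<subseteq> V \<times> V" and nl: "\<forall>v. (v,v)\<notin>E" using G by (auto simp: digraph_def)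
  have "a \<noteq> b" "b \<noteq> c" "c \<noteq> a" using e nl by auto
  then have "is_dcycle E [a,b,c]" using e unfolding is_dcycle_def
  proof (intro conjI allI impI)
    fix i assume "i < length [a,b,c]"
    then have "i = 0 \<or> i = 1 \<or> i = 2" by auto
    then show "([a,b,c] ! i, [a,b,c] ! ((i + 1) mod length [a,b,c])) \<in> E" using e by auto
  qed auto
  moreover have "set [a,b,c] \<subseteq> V" using e sub by auto
  ultimately show False using nc unfolding has_short_cycle_def by fastforce
qed

lemma no4:
  assumes G: "digraph V E" and nc: "\<not> has_short_cycle V E 4"
    and e: "(a,b)\<in>E" "(b,c)\<in>E" "(c,d)\<in>E" "(d,a)\<in>E"
  shows False
proof -
  have sub: "E \<subseteq> V \<times> V" and nl: "\<forall>v. (v,v)\<notin>E" using G by (auto simp: digraph_def)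
  have "a \<noteq> b" "b \<noteq> c" "c \<noteq> d" "d \<noteq> a" using e nl by auto
  moreover have "a \<noteq> c" using no2[OF G nc] e by blast
  moreover have "b \<noteq> d" using no2[OF G nc] e by blast
  ultimately have "is_dcycle E [a,b,c,d]" using e unfolding is_dcycle_def
  proof (intro conjI allI impI)
    fix i assume "i < length [a,b,c,d]"
    then have "i = 0 \<or> i = 1 \<or> i = 2 \<or> i = 3" by auto
    then show "([a,b,c,d] ! i, [a,b,c,d] ! ((i + 1) mod length [a,b,c,d])) \<in> E" using e by auto
  qed auto
  moreover have "set [a,b,c,d] \<subseteq> V" using e sub by auto
  ultimately show False using nc unfolding has_short_cycle_def by fastforce
qed

lemma ih_transfer:
  fixes \<alpha> :: real and V :: "'a set"
  assumes IH: "\<And>m (W :: nat set) F. 1 \<le> m \<Longrightarrow> m < n \<Longrightarrow> digraph W F \<Longrightarrow> card W = m \<Longrightarrow>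
              (\<forall>w\<in>W. real (outdeg F w) \<ge> \<alpha> * real m) \<Longrightarrow> has_short_cycle W F 4"
    and G: "digraph V E" and nc: "\<not> has_short_cycle V E 4"
    and S: "S \<subseteq> V" "1 \<le> card S" "card S < n"
  shows "\<exists>z\<in>S. real (card (out_nbrs E z \<inter> S)) < \<alpha> * real (card S)"
proof (rule ccontr)
  assume H: "\<not> ?thesis"
  have sub: "E \<subseteq> V \<times> V" and nl: "\<forall>v. (v,v)\<notin>E" using G by (auto simp: digraph_def)
  have fin: "finite S" using S G finite_subset digraph_def by blast
  obtain f where f: "bij_betw f S {0..<card S}" using ex_bij_betw_finite_nat fin by blast
  define W where "W = {0..<card S}"
  define F where "F = (\<lambda>(a,b). (f a, f b)) ` (E \<inter> (S \<times> S))"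
  have inj: "inj_on f S" using f bij_betw_imp_inj_on by blast
  have img: "f ` S = W" using f unfolding W_def bij_betw_def by blast
  have dg: "digraph W F"
    unfolding digraph_def
  proof (intro conjI allI)
    show "finite W" unfolding W_def by simp
    show "F \<subseteq> W \<times> W" unfolding F_def using img by auto
    fix w show "(w,w) \<notin> F"
    proof
      assume "(w,w) \<in> F"
      then obtain a b where "(a,b) \<in> E" "a \<in> S" "b \<in> S" "f a = w" "f b = w" unfolding F_def by auto
      then show False using inj nl by (metis inj_onD)
    qed
  qed
  have od: "\<forall>w\<in>W. real (outdeg F w) \<ge> \<alpha> * real (card S)"
  proof
    fix w assume "w \<in> W"
    then obtain a where a: "a \<in> S" "w = f a" using img by auto
    have "out_nbrs F (f a) = f ` (out_nbrs E a \<inter> S)"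
      unfolding out_nbrs_def F_def using a inj by (auto simp: inj_on_eq_iff)
    moreover have "card (f ` (out_nbrs E a \<inter> S)) = card (out_nbrs E a \<inter> S)"
      by (rule card_image) (meson inj inf_le2 inj_on_subset)
    ultimately show "real (outdeg F w) \<ge> \<alpha> * real (card S)"
      using H a unfolding outdeg_def by force
  qed
  obtain vs where vs: "set vs \<subseteq> W" "is_dcycle F vs" "length vs \<le> 4"
    using IH[OF S(2) S(3) dg _ od] unfolding has_short_cycle_def W_def by auto
  define g where "g = inv_into S f"
  have bg: "bij_betw g W S" unfolding g_def W_def using f by (rule bij_betw_inv_into)
  have gf: "\<And>a. a \<in> S \<Longrightarrow> g (f a) = a" unfolding g_def using inj by simp
  have "is_dcycle E (map g vs)"
    unfolding is_dcycle_def
  proof (intro conjI allI impI)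
    show "map g vs \<noteq> []" using vs(2) by (auto simp: is_dcycle_def)
    have "inj_on g (set vs)" using bg vs(1) bij_betw_imp_inj_on inj_on_subset by blast
    then show "distinct (map g vs)" using vs(2) by (simp add: distinct_map is_dcycle_def)
    fix i assume i: "i < length (map g vs)"
    then have "(vs ! i, vs ! ((i+1) mod length vs)) \<in> F" using vs(2) by (auto simp: is_dcycle_def)
    then obtain a b where "(a,b) \<in> E" "a \<in> S" "b \<in> S" "vs ! i = f a" "vs ! ((i+1) mod length vs) = f b"
      unfolding F_def by auto
    moreover have "(i+1) mod length vs < length vs" using i by (metis length_map mod_less_divisor length_pos_if_in_set nth_mem)
    ultimately show "(map g vs ! i, map g vs ! ((i + 1) mod length (map g vs))) \<in> E"
      using i gf by simp
  qed
  moreover have "set (map g vs) \<subseteq> V"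
  proof -
    have "g ` set vs \<subseteq> g ` W" using vs(1) by (rule image_mono)
    also have "g ` W = S" using bg by (simp add: bij_betw_def)
    finally show ?thesis using S(1) by simp
  qed
  ultimately show False using nc vs(3) unfolding has_short_cycle_def by fastforce
qed

theorem mainTheorem2:
  fixes \<alpha> :: real and n :: nat and V :: "'a set" and E :: "('a \<times> 'a) set"
  assumes alpha: "0 < \<alpha>" "\<alpha> < 1"
    and npos: "0 < n"
    and IH: "\<And>m (W :: nat set) F. 1 \<le> m \<Longrightarrow> m < n \<Longrightarrow> digraph W F \<Longrightarrow> card W = m \<Longrightarrow>
              (\<forall>w\<in>W. real (outdeg F w) \<ge> \<alpha> * real m) \<Longrightarrow> has_short_cycle W F 4"
    and G: "digraph V E" "card V = n"
    and reg: "\<forall>v\<in>V. outdeg E v = nat \<lceil>\<alpha> * real n\<rceil>"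
    and nocyc: "\<not> has_short_cycle V E 4"
  shows "\<forall>(u, v) \<in> E.
           real n > real (nat \<lceil>\<alpha> * real n\<rceil>) + real (indeg E v) + real (qq E u v)
                    + (1 - \<alpha>) * real (nat \<lceil>\<alpha> * real n\<rceil>)
                    + (1 - \<alpha>)^2 * real (tt E u v)"
proof (intro ballI, clarify)
  fix u v assume uv: "(u,v) \<in> E"
  define r where "r = nat \<lceil>\<alpha> * real n\<rceil>"
  have sub: "E \<subseteq> V \<times> V" and nl: "\<forall>v. (v,v)\<notin>E" and finV: "finite V"
    using G by (auto simp: digraph_def)
  note n2 = no2[OF G(1) nocyc] and n3 = no3[OF G(1) nocyc] and n4 = no4[OF G(1) nocyc]
  have uV: "u \<in> V" and vV: "v \<in> V" using uv sub by auto
  have outV: "\<And>x. out_nbrs E x \<subseteq> V" using sub unfolding out_nbrs_def by auto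
  have inV: "\<And>x. in_nbrs E x \<subseteq> V" using sub unfolding in_nbrs_def by auto
  have finout: "\<And>x. finite (out_nbrs E x)" using outV finV finite_subset by blast
  have cout: "\<And>x. x \<in> V \<Longrightarrow> card (out_nbrs E x) = r" using reg unfolding r_def outdeg_def by auto
  have ra: "real r \<ge> \<alpha> * real n" unfolding r_def by linarith
  define P where "P = out_nbrs E v"
  define N where "N = in_nbrs E v"
  define Q where "Q = in_nbrs E u - in_nbrs E v"
  define R where "R = V - ({v} \<union> P \<union> N \<union> Q)"
  have finP: "finite P" and finN: "finite N" and finQ: "finite Q" and finR: "finite R"
    unfolding P_def N_def Q_def R_def using finout inV finV finite_subset
    by (auto intro: finite_subset[OF _ finV])
  have cP: "card P = r" unfolding P_def using cout vV by simp
  have vP: "v \<notin> P" unfolding P_def out_nbrs_def using nl by auto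
  have vN: "v \<notin> N" unfolding N_def in_nbrs_def using nl by auto
  have vQ: "v \<notin> Q" unfolding Q_def in_nbrs_def using n2 uv by auto
  have PN: "P \<inter> N = {}" unfolding P_def N_def out_nbrs_def in_nbrs_def using n2 by auto
  have PQ: "P \<inter> Q = {}" unfolding P_def Q_def out_nbrs_def in_nbrs_def using n3 uv by blast
  have NQ: "N \<inter> Q = {}" unfolding N_def Q_def by auto
  have AV: "{v} \<union> P \<union> N \<union> Q \<subseteq> V" using vV outV inV unfolding P_def N_def Q_def by blast
  have cA: "card ({v} \<union> P \<union> N \<union> Q) = 1 + card P + card N + card Q"
  proof -
    have "card ({v} \<union> P) = 1 + card P" using vP finP by simp
    moreover have "card ({v} \<union> P \<union> N) = card ({v} \<union> P) + card N"
      using vN PN finP finN by (intro card_Un_disjoint) auto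
    moreover have "card ({v} \<union> P \<union> N \<union> Q) = card ({v} \<union> P \<union> N) + card Q"
      using vQ PQ NQ finP finN finQ by (intro card_Un_disjoint) auto
    ultimately show ?thesis by simp
  qed
  have cV: "n = 1 + r + card N + card Q + card R"
  proof -
    have "card R = card V - card ({v} \<union> P \<union> N \<union> Q)"
      unfolding R_def using AV finV by (meson card_Diff_subset finite_subset)
    moreover have "card ({v} \<union> P \<union> N \<union> Q) \<le> card V" using AV finV card_mono by blast
    ultimately show ?thesis using cA cP G(2) by simp
  qed
  have PR: "P \<inter> R = {}" unfolding R_def by auto
  have rn: "r < n" using cV by simp
  have r1: "1 \<le> r" using ra alpha npos
    by (metis less_one linorder_not_less mult_pos_pos of_nat_0 of_nat_0_less_iff order_less_le_trans)
  have closP: "\<And>z. z \<in> P \<Longrightarrow> out_nbrs E z \<subseteq> P \<union> R"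
  proof
    fix z w assume z: "z \<in> P" and w: "w \<in> out_nbrs E z"
    have vz: "(v,z) \<in> E" and zw: "(z,w) \<in> E" using z w unfolding P_def out_nbrs_def by auto
    have "w \<noteq> v" using n2 vz zw by blast
    moreover have "w \<notin> N" using n3 vz zw unfolding N_def in_nbrs_def by blast
    moreover have "w \<notin> Q" using n4 vz zw uv unfolding Q_def in_nbrs_def by blast
    moreover have "w \<in> V" using w outV by blast
    ultimately show "w \<in> P \<union> R" unfolding R_def by blast
  qed
  have bound: "real (card R) > (1-\<alpha>) * real r + (1-\<alpha>) * real (card X)"
    if X: "X \<subseteq> R" "\<And>z. z \<in> X \<Longrightarrow> out_nbrs E z \<subseteq> P \<union> R" for X
  proof -
    define S where "S = P \<union> X"
    have finX: "finite X" using X(1) finR finite_subset by blast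
    have PX: "P \<inter> X = {}" using PR X(1) by blast
    have cS: "card S = r + card X" unfolding S_def using cP card_Un_disjoint[OF finP finX PX] by simp
    have SV: "S \<subseteq> V - {v}" unfolding S_def using X(1) AV vP unfolding R_def by blast
    have "card S \<le> card (V - {v})" using SV finV by (intro card_mono) auto
    then have Sn: "card S < n" using vV G(2) npos finV by simp
    have S1: "1 \<le> card S" using cS r1 by simp
    have "\<exists>z\<in>S. real (card (out_nbrs E z \<inter> S)) < \<alpha> * real (card S)"
      apply (rule ih_transfer[where \<alpha>=\<alpha> and n=n and S=S and V=V and E=E])
           apply (rule IH; assumption)
      using G(1) nocyc S1 Sn SV by auto
    then obtain z where z: "z \<in> S" "real (card (out_nbrs E z \<inter> S)) < \<alpha> * real (card S)"
      by blast
    have zV: "z \<in> V" using z SV by blast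
    have "out_nbrs E z \<subseteq> P \<union> R" using z closP X(2) unfolding S_def by blast
    then have ozR: "out_nbrs E z - S \<subseteq> R - X" unfolding S_def by blast
    have "card (out_nbrs E z) = card (out_nbrs E z \<inter> S) + card (out_nbrs E z - S)"
      using finout by (metis Int_Diff_Un Int_Diff_disjoint card_Un_disjoint finite_Diff finite_Int)
    then have c1: "card (out_nbrs E z - S) = r - card (out_nbrs E z \<inter> S)"
      "card (out_nbrs E z \<inter> S) \<le> r" using cout zV by auto
    have "card (out_nbrs E z - S) \<le> card (R - X)" using ozR finR by (intro card_mono) auto
    moreover have "card R = card X + card (R - X)" using X(1) finX finR
      by (metis card_Diff_subset card_mono le_add_diff_inverse)
    ultimately have "real (card R) \<ge> real (card X) + real r - real (card (out_nbrs E z \<inter> S))"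
      using c1 by simp
    then show ?thesis using z(2) cS by (simp add: algebra_simps)
  qed
  define T where "T = out_nbrs E u \<inter> out_nbrs E v"
  have tt: "tt E u v = card T" unfolding tt_def T_def by simp
  have finT: "finite T" unfolding T_def using finout by blast
  obtain X where X: "X \<subseteq> R" "\<And>z. z \<in> X \<Longrightarrow> out_nbrs E z \<subseteq> P \<union> R"
    "real (card X) \<ge> (1-\<alpha>) * real (card T)"
  proof (cases "card T = 0")
    case True
    then show ?thesis using that[of "{}"] by simp
  next
    case False
    have TP: "T \<subseteq> P" unfolding T_def P_def by blast
    have "card T \<le> r" using TP cP finP card_mono by metis
    then have "\<exists>x\<in>T. real (card (out_nbrs E x \<inter> T)) < \<alpha> * real (card T)"
      apply -
      apply (rule ih_transfer[where \<alpha>=\<alpha> and n=n and S=T and V=V and E=E])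
           apply (rule IH; assumption)
      using G(1) nocyc False rn TP AV by auto
    then obtain x where x: "x \<in> T" "real (card (out_nbrs E x \<inter> T)) < \<alpha> * real (card T)"
      by blast
    define X where "X = out_nbrs E x - P"
    have xP: "x \<in> P" using x TP by blast
    have ux: "(u,x) \<in> E" and vx: "(v,x) \<in> E" using x unfolding T_def out_nbrs_def by auto
    have XR: "X \<subseteq> R" unfolding X_def using closP[OF xP] by blast
    have clX: "out_nbrs E z \<subseteq> P \<union> R" if z: "z \<in> X" for z
    proof
      fix w assume w: "w \<in> out_nbrs E z"
      have xz: "(x,z) \<in> E" and zw: "(z,w) \<in> E" using z w unfolding X_def out_nbrs_def by auto
      have "w \<noteq> v" using n3 vx xz zw by blast
      moreover have "w \<notin> N" using n4 vx xz zw unfolding N_def in_nbrs_def by blast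
      moreover have "w \<notin> Q" using n4 ux xz zw unfolding Q_def in_nbrs_def by blast
      moreover have "w \<in> V" using w outV by blast
      ultimately show "w \<in> P \<union> R" unfolding R_def by blast
    qed
    have xV: "x \<in> V" using xP AV by blast
    have c1: "card (out_nbrs E x) = card (out_nbrs E x \<inter> P) + card X"
      unfolding X_def using finout
      by (metis Int_Diff_Un Int_Diff_disjoint card_Un_disjoint finite_Diff finite_Int)
    have "out_nbrs E x \<inter> P \<subseteq> (out_nbrs E x \<inter> T) \<union> (P - T)" by blast
    then have "card (out_nbrs E x \<inter> P) \<le> card ((out_nbrs E x \<inter> T) \<union> (P - T))"
      using finP finT by (intro card_mono) auto
    also have "\<dots> \<le> card (out_nbrs E x \<inter> T) + card (P - T)" by (rule card_Un_le)
    also have "card (P - T) = r - card T" using TP finT cP by (simp add: card_Diff_subset)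
    finally have "card (out_nbrs E x \<inter> P) \<le> card (out_nbrs E x \<inter> T) + (r - card T)" .
    moreover have "card T \<le> r" by fact
    ultimately have "real (card X) \<ge> real r - real (card (out_nbrs E x \<inter> T)) - real r + real (card T)"
      using c1 cout[OF xV] by linarith
    then have "real (card X) \<ge> (1-\<alpha>) * real (card T)" using x(2) by (simp add: algebra_simps)
    then show ?thesis using that[of X] XR clX by blast
  qed
  have b: "real (card R) > (1-\<alpha>) * real r + (1-\<alpha>) * real (card X)" using bound[OF X(1,2)] .
  have "(1-\<alpha>) * real (card X) \<ge> (1-\<alpha>)^2 * real (card T)"
    using X(3) alpha by (simp add: power2_eq_square mult.assoc mult_left_mono)
  moreover have "indeg E v = card N" unfolding indeg_def N_def by simp
  moreover have "qq E u v = card Q" unfolding qq_def Q_def by simp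
  ultimately show "real n > real (nat \<lceil>\<alpha> * real n\<rceil>) + real (indeg E v) + real (qq E u v)
                    + (1 - \<alpha>) * real (nat \<lceil>\<alpha> * real n\<rceil>)
                    + (1 - \<alpha>)^2 * real (tt E u v)"
    using b cV tt unfolding r_def[symmetric] by simp
qed

end
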